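(* Let $w,s,t$ be positive integers with $t\mid s$ and $t\ne s$, and suppose $2\mid s/t$ but $4\nmid s/t$. For $l\in I\big(s/(2t)\big)$ set $$f(l)=\sum_{k\in\{l,\;2l\}}(-1)^{\omega(s/(kt))}(-1)^{ktw}\binom{k(tw-1)-1}{k-1}.$$ Then $f(l)\equiv0\pmod 4$ for every $l\in I\big(s/(2t)\big)$.
   Context: For a positive integer $n$, $\omega(n)$ is the number of distinct primes dividing $n$, and $I(n)=\{k\in\mathbb{N}: k\mid n \text{ and } n/k \text{ is square-free}\}$. Binomial coefficients $\binom{n}{m}$ with $n\in\mathbb{Z}$, $m\ge0$ mean $n(n-1)\cdots(n-m+1)/m!$. *)

theory Defs
  imports "HOL-Computational_Algebra.Computational_Algebra"
begin

definition omega :: "nat \<Rightarrow> nat" where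
  "omega n = card (prime_factors n)"

definition Iset :: "nat \<Rightarrow> nat set" where
  "Iset n = {k. k > 0 \<and> k dvd n \<and> squarefree (n div k)}"

definition ibinom :: "int \<Rightarrow> nat \<Rightarrow> int" where
  "ibinom n m = (\<Prod>i<m. n - int i) div fact m"

end

theory Submission
  imports Defs Complex_Main
begin

lemma ibinom_eq: fixes x :: int shows "ibinom x m * fact m = (\<Prod>i<m. x - int i)"
proof -
  have "fact m dvd (\<Prod>i<m. x - int i)"
    unfolding lessThan_atLeast0 falling_fact_pochhammer' by (rule fact_dvd_pochhammer)
  thus ?thesis unfolding ibinom_def by simp
qed

lemma prod_split2: fixes g :: "nat \<Rightarrow> int" and L :: nat shows "(\<Prod>i<2*L+1. (g i::int)) = (\<Prod>j<L. g(2*j+1)) * (\<Prod>j<L+1. g(2*j))"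
proof (induction L)
  case 0 then show ?case by simp
next
  case (Suc L)
  have e: "2 * Suc L + 1 = Suc (Suc (2*L+1))" by simp
  show ?case unfolding e prod.lessThan_Suc Suc
    by (simp add: algebra_simps)
qed

definition NN :: "int \<Rightarrow> nat \<Rightarrow> int" where "NN c m = (\<Prod>j<m. 2*c - 1 - 2*int j)"
definition DD :: "nat \<Rightarrow> int" where "DD m = (\<Prod>j<m. 2*int j + 1)"

lemma fact_split: "(fact (2*L+1) :: int) = 2^L * fact L * DD (L+1)"
proof (induction L)
  case 0 then show ?case by (simp add: DD_def)
next
  case (Suc L)
  have e: "2 * Suc L + 1 = Suc (Suc (2*L+1))" by simp
  have "(fact (2 * Suc L + 1) :: int) = (fact (2*L+1) :: int) * (2*int L+2) * (2*int L+3)"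
    unfolding e by (simp add: algebra_simps)
  also have "\<dots> = 2^L * fact L * DD (L+1) * (2*int L+2) * (2*int L+3)"
    unfolding Suc.IH ..
  also have "\<dots> = 2^Suc L * fact (Suc L) * DD (Suc L + 1)"
    by (simp add: DD_def algebra_simps)
  finally show ?case .
qed

lemma PB_split: fixes c :: int shows "(\<Prod>i<2*L+1. 2*c - 1 - int i) = 2^L * (\<Prod>i<L. c - 1 - int i) * NN c (L+1)"
proof -
  have "(\<Prod>i<2*L+1. 2*c - 1 - int i) = (\<Prod>j<L. 2*c - 1 - int (2*j+1)) * (\<Prod>j<L+1. 2*c - 1 - int (2*j))"
    by (rule prod_split2)
  also have "(\<Prod>j<L. 2*c - 1 - int (2*j+1)) = (\<Prod>j<L. 2 * (c - 1 - int j))"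
    by (rule prod.cong) (auto simp: algebra_simps)
  also have "\<dots> = 2^L * (\<Prod>i<L. c - 1 - int i)"
    by (induction L) (simp_all add: algebra_simps)
  finally show ?thesis by (simp add: NN_def)
qed

lemma BD_AN: fixes c :: int shows "ibinom (2*c-1) (2*L+1) * DD (L+1) = ibinom (c-1) L * NN c (L+1)"
proof -
  have "ibinom (2*c-1) (2*L+1) * (2^L * fact L * DD (L+1)) = 2^L * (ibinom (c-1) L * fact L) * NN c (L+1)"
    using ibinom_eq[of "2*c-1" "2*L+1"] PB_split[of c L] ibinom_eq[of "c-1" L] fact_split[of L] by simp
  hence "(2^L * fact L) * (ibinom (2*c-1) (2*L+1) * DD (L+1)) = (2^L * fact L) * (ibinom (c-1) L * NN c (L+1))"
    by (simp add: algebra_simps)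
  moreover have "(2^L * fact L :: int) \<noteq> 0" by simp
  ultimately show ?thesis by simp
qed

lemma N_cong: fixes c :: int shows "(4::int) dvd (NN c m - (-1)^m * DD m * (1 + 2 * int m * c))"
proof (induction m)
  case 0 then show ?case by (simp add: NN_def DD_def)
next
  case (Suc m)
  define X where "X = (-1::int)^m * DD m * (1 + 2 * int m * c)"
  have eq: "NN c (Suc m) - (-1)^(Suc m) * DD (Suc m) * (1 + 2 * int (Suc m) * c)
     = (NN c m - X) * (2*c - 1 - 2*int m) + 4 * ((-1)^m * DD m * (c + int m * c^2 + int m * c))"
    unfolding NN_def DD_def X_def by (simp add: algebra_simps power2_eq_square)
  have "4 dvd (NN c m - X)" using Suc by (simp add: X_def)
  then show ?case unfolding eq by (simp add: dvd_add dvd_mult2)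
qed

lemma DD_odd: "odd (DD m)"
  unfolding DD_def by (induction m) auto

lemma key:
  fixes c :: int
  assumes "even L"
  shows "(4::int) dvd (ibinom (2*c-1) (2*L+1) + (1 + 2*c) * ibinom (c-1) L)"
proof -
  define B where "B = ibinom (2*c-1) (2*L+1)"
  define A where "A = ibinom (c-1) L"
  define D where "D = DD (L+1)"
  define N where "N = NN c (L+1)"
  have BD: "B * D = A * N" using BD_AN unfolding A_def B_def D_def N_def .
  have h1: "4 dvd (N - (-1)^(L+1) * D * (1 + 2 * int (L+1) * c))"
    using N_cong unfolding N_def D_def .
  obtain q where q: "L = 2*q" using assms by blast
  have m1: "(-1::int)^L = 1" using assms by simp
  have h2: "4 dvd (N + D * (1 + 2*c))"
  proof -
    have "N + D * (1 + 2*c) = (N - (-1)^(L+1) * D * (1 + 2 * int (L+1) * c)) - 4 * (D * int q * c)"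
      using q m1 by (simp add: algebra_simps)
    moreover have "4 dvd (N - (-1)^(L+1) * D * (1 + 2 * int (L+1) * c)) - 4 * (D * int q * c)"
      using h1 by simp
    ultimately show ?thesis by metis
  qed
  obtain r where r: "D = 2*r+1" using DD_odd[of "L+1"] unfolding D_def by (metis oddE)
  have "B + (1+2*c)*A = B * (1 - D*D) + D * (B * D - A * N) + A * D * (N + D*(1+2*c)) + (1+2*c)*A*(1 - D*D)"
    by (simp add: algebra_simps)
  also have "\<dots> = 4 * (- B * (r*r + r) - (1+2*c)*A*(r*r+r)) + A * D * (N + D*(1+2*c))"
    using BD r by (simp add: algebra_simps)
  finally have e: "B + (1+2*c)*A = 4 * (- B * (r*r + r) - (1+2*c)*A*(r*r+r)) + A * D * (N + D*(1+2*c))" .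
  show ?thesis unfolding B_def[symmetric] A_def[symmetric] e using h2 by simp
qed

lemma omega_double: assumes "odd r" shows "omega (2*r) = Suc (omega r)"
proof -
  have r0: "r \<noteq> 0" using assms by (metis dvd_0_right)
  have "prime_factors (2*r) = prime_factors 2 \<union> prime_factors r"
    using r0 by (simp add: prime_factors_product)
  also have "prime_factors (2::nat) = {2}" by (simp add: prime_prime_factors)
  finally have e: "prime_factors (2*r) = insert 2 (prime_factors r)" by simp
  have "2 \<notin> prime_factors r" using assms by (auto simp: in_prime_factors_iff)
  thus ?thesis unfolding omega_def e by simp
qed

lemma final_cong:
  fixes l p :: nat and B A :: int
  assumes "odd l" "p > 0" "4 dvd (B + (1 + 2 * (int l * (int p - 1))) * A)"
  shows "4 dvd (B - (-1)^(l*p) * A)"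
proof (cases "even p")
  case True
  then obtain q where q: "p = 2*q" by blast
  obtain u where u: "l = 2*u+1" using assms(1) oddE by blast
  have q0: "q > 0" using q assms by simp
  have sg: "(-1::int)^(l*p) = 1" using True by simp
  have "B - (-1::int)^(l*p) * A = (B + (1 + 2 * (int l * (int p - 1))) * A) - 4 * ((int u * (2 * int q - 1) + int q) * A)"
    unfolding sg using q u by (simp add: algebra_simps)
  also have "4 dvd \<dots>" by (rule dvd_diff[OF assms(3)]) simp
  finally show ?thesis .
next
  case False
  then obtain q where q: "p = 2*q+1" using oddE by blast
  have sg: "(-1::int)^(l*p) = -1" using False assms(1) by simp
  have "B - (-1::int)^(l*p) * A = (B + (1 + 2 * (int l * (int p - 1))) * A) - 4 * (int l * int q * A)"
    unfolding sg using q by (simp add: algebra_simps)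
  also have "4 dvd \<dots>" by (rule dvd_diff[OF assms(3)]) simp
  finally show ?thesis .
qed

lemma sum_two: "a \<noteq> b \<Longrightarrow> (\<Sum>k\<in>{a, b}. (f k :: int)) = f a + f b"
  by simp

theorem lemma3p4:
  fixes w s t :: nat
  assumes "w > 0" and "s > 0" and "t > 0"
    and "t dvd s" and "t \<noteq> s"
    and "2 dvd (s div t)" and "\<not> 4 dvd (s div t)"
  shows "\<forall>l \<in> Iset (s div (2 * t)).
           (\<Sum>k\<in>{l, 2 * l}.
              (-1::int) ^ omega (s div (k * t)) * (-1) ^ (k * t * w)
              * ibinom (int k * (int t * int w - 1) - 1) (k - 1)) mod 4 = 0"
proof
  fix l assume "l \<in> Iset (s div (2 * t))"
  hence l0: "l > 0" and ldvd: "l dvd s div (2*t)" unfolding Iset_def by auto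
  obtain m where m: "s = t * m" using assms(4) by blast
  have md: "s div t = m" using m assms(3) by simp
  obtain m' where m': "m = 2 * m'" using assms(6) md by blast
  have m'odd: "odd m'"
  proof (rule ccontr)
    assume "\<not> odd m'"
    then obtain q where "m' = 2*q" by blast
    hence "s div t = 4*q" using md m' by simp
    thus False using assms(7) by simp
  qed
  have s0: "s = (2*t)*m'" using m m' by simp
  have t20: "2*t \<noteq> 0" using assms(3) by simp
  have sd2: "s div (2*t) = m'" by (subst s0, rule nonzero_mult_div_cancel_left[OF t20])
  obtain r where r: "m' = l * r" using ldvd sd2 by blast
  have lodd: "odd l" and rodd: "odd r" using m'odd r by simp_all
  have s1: "s = (l * t) * (2 * r)" unfolding s0 r by (simp only: ac_simps)
  have s2: "s = (2 * l * t) * r" unfolding s0 r by (simp only: ac_simps)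
  have lt0: "l * t \<noteq> 0" using l0 assms(3) by simp
  have d1: "s div (l * t) = 2 * r" by (subst s1, rule nonzero_mult_div_cancel_left[OF lt0])
  have d2: "s div (2 * l * t) = r" using lt0 by (subst s2, intro nonzero_mult_div_cancel_left) simp
  have ne: "l \<noteq> 2 * l" using l0 by simp
  define c where "c = int l * (int t * int w - 1)"
  define B where "B = ibinom (2*c - 1) (2*(l-1)+1)"
  define A where "A = ibinom (c - 1) (l-1)"
  have key': "4 dvd (B + (1 + 2*c) * A)" unfolding A_def B_def
    by (rule key) (use lodd in simp)
  have e1: "2*(l-1)+1 = 2*l-1" using l0 by simp
  have e2: "int (2 * l) * (int t * int w - 1) - 1 = 2*c - 1" unfolding c_def by simp
  have Beq: "ibinom (int (2 * l) * (int t * int w - 1) - 1) (2 * l - 1) = B"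
    unfolding B_def e1 e2 ..
  have Aeq: "ibinom (int l * (int t * int w - 1) - 1) (l - 1) = A"
    unfolding A_def c_def by simp
  have c': "c = int l * (int (t*w) - 1)" unfolding c_def by simp
  have tw: "t * w > 0" using assms by simp
  have fc: "4 dvd (B - (-1)^(l*(t*w)) * A)"
    using key' unfolding c' by (rule final_cong[OF lodd tw])
  have sgn2: "(-1::int)^(2*l*t*w) = 1"
  proof -
    have "2*l*t*w = 2*(l*t*w)" by (simp only: mult.assoc)
    thus ?thesis by (simp only: power_mult) simp
  qed
  have sgn1: "(-1::int)^(l*t*w) = (-1)^(l*(t*w))" by (simp only: mult.assoc)
  have om: "omega (2*r) = Suc (omega r)" by (rule omega_double[OF rodd])
  define F where "F = (\<lambda>k::nat. (-1::int) ^ omega (s div (k * t)) * (-1) ^ (k * t * w)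
              * ibinom (int k * (int t * int w - 1) - 1) (k - 1))"
  have hF: "sum F {l, 2*l} = F l + F (2*l)" using ne by simp
  have "(\<Sum>k\<in>{l, 2 * l}.
              (-1::int) ^ omega (s div (k * t)) * (-1) ^ (k * t * w)
              * ibinom (int k * (int t * int w - 1) - 1) (k - 1))
      = (-1::int) ^ omega (s div (l * t)) * (-1) ^ (l * t * w)
              * ibinom (int l * (int t * int w - 1) - 1) (l - 1)
        + (-1::int) ^ omega (s div (2 * l * t)) * (-1) ^ (2 * l * t * w)
              * ibinom (int (2 * l) * (int t * int w - 1) - 1) (2 * l - 1)"
    using hF unfolding F_def .
  also have "\<dots> = (-1) ^ Suc (omega r) * (-1)^(l*(t*w)) * A + (-1)^omega r * 1 * B"
    unfolding d1 d2 Aeq Beq sgn1 sgn2 om ..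
  also have "\<dots> = (-1)^omega r * (B - (-1)^(l*(t*w)) * A)"
    by (simp add: algebra_simps)
  finally have eq: "(\<Sum>k\<in>{l, 2 * l}.
              (-1::int) ^ omega (s div (k * t)) * (-1) ^ (k * t * w)
              * ibinom (int k * (int t * int w - 1) - 1) (k - 1)) = (-1)^omega r * (B - (-1)^(l*(t*w)) * A)" .
  have "4 dvd (-1::int)^omega r * (B - (-1)^(l*(t*w)) * A)" using fc by (rule dvd_mult)
  thus "(\<Sum>k\<in>{l, 2 * l}.
              (-1::int) ^ omega (s div (k * t)) * (-1) ^ (k * t * w)
              * ibinom (int k * (int t * int w - 1) - 1) (k - 1)) mod 4 = 0"
    unfolding eq by (rule dvd_imp_mod_0)
qed

end
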